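(* Let $\mathbb{F}$ be a field, $d\geq3$ and $V$ a vector space over $\mathbb{F}$ of dimension $d+1$. Let $E^*_0,\dots,E^*_d$ be a system of mutually orthogonal idempotents in $\mathrm{End}(V)$ and $A\in\mathrm{End}(V)$ with $E^*_iAE^*_j=0$ if $|i-j|>1$ and $E^*_iAE^*_j\neq0$ if $|i-j|=1$. Assume $A$ is multiplicity-free and bipartite with primitive idempotents $E_0,\dots,E_d$. Let $\theta^*_0,\dots,\theta^*_d\in\mathbb{F}$ be mutually distinct and $A^*=\sum_i\theta^*_iE^*_i$. Assume $E_0$ is normalizing and $(E_0,E_1)$ is a tail. Then $\dfrac{\theta^*_j-\theta^*_{j-3}}{\theta^*_{j-1}-\theta^*_{j-2}}$ is independent of $j$ for $3\le j\le d$.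
   Context: A system of mutually orthogonal idempotents: $E^*_iE^*_j=\delta_{ij}E^*_i$, $\operatorname{rank}E^*_i=1$. $A$ multiplicity-free: $d+1$ distinct eigenvalues in $\mathbb{F}$; the primitive idempotent for an eigenvalue is the projection onto its eigenspace along the other eigenspaces. Bipartite: $\operatorname{tr}(E^*_iA)=0$ for all $i$. $\Delta$: graph on $E_0,\dots,E_d$ with $E_i\neq E_j$ adjacent iff $E_iA^*E_j\neq0$. $(E_0,E_1)$ is a tail if $E_0$ is adjacent to no vertex other than $E_1$ and $E_1$ is adjacent to at most one vertex other than $E_0$. The matrix $Y$ representing $A$ w.r.t. a basis $v_0,\dots,v_d$ satisfies $Av_j=\sum_iY_{ij}v_i$. An eigenvalue $\theta$ of $A$ is normalizing if some basis with $v_i\in E^*_iV$ makes every row sum of the matrix representing $A$ equal to $\theta$; a primitive idempotent is normalizing if its eigenvalue is. *)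

theory Defs
  imports "Jordan_Normal_Form.DL_Rank" "Jordan_Normal_Form.Char_Poly"
begin

text \<open>Endomorphisms of V = F^(d+1) are represented by (d+1) x (d+1) matrices.\<close>

definition mat_trace :: "'a::comm_ring_1 mat \<Rightarrow> 'a" where
  "mat_trace M = (\<Sum>i<dim_row M. M $$ (i,i))"

definition mat_rank :: "'a::field mat \<Rightarrow> nat" where
  "mat_rank M = vec_space.rank (dim_row M) M"

definition orth_idem_system :: "nat \<Rightarrow> (nat \<Rightarrow> 'a::field mat) \<Rightarrow> bool" where
  "orth_idem_system d Es \<longleftrightarrow>
     (\<forall>i\<le>d. Es i \<in> carrier_mat (d+1) (d+1) \<and> mat_rank (Es i) = 1) \<and>
     (\<forall>i\<le>d. \<forall>j\<le>d. Es i * Es j = (if i = j then Es i else 0\<^sub>m (d+1) (d+1)))"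

definition multiplicity_free :: "nat \<Rightarrow> 'a::field mat \<Rightarrow> bool" where
  "multiplicity_free d A \<longleftrightarrow> (\<exists>th. inj_on th {0..d} \<and> (\<forall>i\<le>d. eigenvalue A (th i)))"

definition primitive_idempotent :: "nat \<Rightarrow> 'a::field mat \<Rightarrow> 'a \<Rightarrow> 'a mat \<Rightarrow> bool" where
  "primitive_idempotent d A th E \<longleftrightarrow> E \<in> carrier_mat (d+1) (d+1) \<and>
     (\<forall>v \<in> carrier_vec (d+1). A *\<^sub>v v = th \<cdot>\<^sub>v v \<longrightarrow> E *\<^sub>v v = v) \<and>
     (\<forall>mu v. mu \<noteq> th \<longrightarrow> v \<in> carrier_vec (d+1) \<longrightarrow> A *\<^sub>v v = mu \<cdot>\<^sub>v v \<longrightarrow> E *\<^sub>v v = 0\<^sub>v (d+1))"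

definition bipartite :: "nat \<Rightarrow> (nat \<Rightarrow> 'a::field mat) \<Rightarrow> 'a mat \<Rightarrow> bool" where
  "bipartite d Es A \<longleftrightarrow> (\<forall>i\<le>d. mat_trace (Es i * A) = 0)"

definition dual_comb :: "nat \<Rightarrow> (nat \<Rightarrow> 'a::field) \<Rightarrow> (nat \<Rightarrow> 'a mat) \<Rightarrow> 'a mat" where
  "dual_comb d ths Es = mat (d+1) (d+1) (\<lambda>(r,c). \<Sum>i\<le>d. ths i * (Es i $$ (r,c)))"

definition Delta_adj :: "nat \<Rightarrow> (nat \<Rightarrow> 'a::field mat) \<Rightarrow> 'a mat \<Rightarrow> nat \<Rightarrow> nat \<Rightarrow> bool" where
  "Delta_adj d E As i j \<longleftrightarrow> i \<le> d \<and> j \<le> d \<and> E i \<noteq> E j \<and> E i * As * E j \<noteq> 0\<^sub>m (d+1) (d+1)"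

definition is_tail :: "nat \<Rightarrow> (nat \<Rightarrow> 'a::field mat) \<Rightarrow> 'a mat \<Rightarrow> bool" where
  "is_tail d E As \<longleftrightarrow>
     (\<forall>j\<le>d. E j \<noteq> E 1 \<longrightarrow> \<not> Delta_adj d E As 0 j) \<and>
     card {E j | j. j \<le> d \<and> E j \<noteq> E 0 \<and> Delta_adj d E As 1 j} \<le> 1"

text \<open>th is normalizing: some basis v_0..v_d with v_i in E*_i V such that every row
  sum of the matrix Y representing A (A v_j = sum_i Y_ij v_i) equals th.\<close>
definition normalizing :: "nat \<Rightarrow> (nat \<Rightarrow> 'a::field mat) \<Rightarrow> 'a mat \<Rightarrow> 'a \<Rightarrow> bool" where
  "normalizing d Es A th \<longleftrightarrow>
     (\<exists>v :: nat \<Rightarrow> 'a vec. \<exists>Y :: nat \<Rightarrow> nat \<Rightarrow> 'a.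
        (\<forall>i\<le>d. v i \<in> carrier_vec (d+1) \<and> (\<exists>w \<in> carrier_vec (d+1). v i = Es i *\<^sub>v w)) \<and>
        (\<forall>c :: nat \<Rightarrow> 'a. (\<forall>k<d+1. (\<Sum>i\<le>d. c i * (v i $ k)) = 0) \<longrightarrow> (\<forall>i\<le>d. c i = 0)) \<and>
        (\<forall>w \<in> carrier_vec (d+1). \<exists>c :: nat \<Rightarrow> 'a. \<forall>k<d+1. w $ k = (\<Sum>i\<le>d. c i * (v i $ k))) \<and>
        (\<forall>j\<le>d. \<forall>k<d+1. (A *\<^sub>v v j) $ k = (\<Sum>i\<le>d. Y i j * (v i $ k))) \<and>
        (\<forall>i\<le>d. (\<Sum>j\<le>d. Y i j) = th))"

end

theory Submission
  imports Defs "Jordan_Normal_Form.Determinant"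
begin


lemma core_step:
  fixes s t u :: "'a::field"
  assumes B: "s^2 - be*s*t + t^2 - ga*(s+t) - de = 0"
    and P: "th1*t*(s+u) - k*s*u = tm*t^2 + lam*t + mu"
    and h1: "th1*be = tm + k" and h2: "ga*(th1+k) = lam" and h3: "de*k = mu"
    and nz: "k*s \<noteq> th1*t"
  shows "s + u = be*t + ga \<and> t^2 - be*t*u + u^2 - ga*(t+u) - de = 0"
proof -
  define u' where "u' = be*t+ga-s"
  have s2: "s^2 = be*s*t - t^2 + ga*(s+t) + de"
  proof -
    have "s^2 = (s^2 - be*s*t + t^2 - ga*(s+t) - de) + (be*s*t - t^2 + ga*(s+t) + de)"
      by (simp add: algebra_simps)
    thus ?thesis unfolding B by simp
  qed
  have P': "th1*t*(s+u') - k*s*u' = tm*t^2 + lam*t + mu"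
  proof -
    have "th1*t*(s+u') - k*s*u' = (th1*be)*t^2 + th1*ga*t - k*s*(be*t+ga) + k*s^2"
      unfolding u'_def by (simp add: algebra_simps power2_eq_square)
    also have "\<dots> = (tm+k)*t^2 + th1*ga*t - k*s*(be*t+ga) + k*(be*s*t - t^2 + ga*(s+t) + de)"
      unfolding h1 s2 ..
    also have "\<dots> = tm*t^2 + (ga*(th1+k))*t + de*k" by (simp add: algebra_simps power2_eq_square)
    also have "\<dots> = tm*t^2 + lam*t + mu" unfolding h2 h3 ..
    finally show ?thesis .
  qed
  have "(u - u')*(th1*t - k*s) = (th1*t*(s+u) - k*s*u) - (th1*t*(s+u') - k*s*u')"
    by (simp add: algebra_simps)
  hence "(u - u')*(th1*t - k*s) = 0" unfolding P P' by simp
  hence "u = u'" using nz by auto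
  moreover have "t^2 - be*t*u' + u'^2 - ga*(t+u') - de = s^2 - be*s*t + t^2 - ga*(s+t) - de"
    unfolding u'_def by (simp add: algebra_simps power2_eq_square)
  ultimately show ?thesis using B unfolding u'_def by simp
qed



lemma core_P:
  fixes s t u b c :: "'a::field"
  assumes e1: "c + b = k" and e2: "c * s + b * u = th1 * t"
      and e3: "c * s^2 + b * u^2 = tm * t^2 + lam * t + mu"
  shows "th1 * t * (s + u) - k * s * u = tm * t^2 + lam * t + mu"
  unfolding e1[symmetric] e3[symmetric] mult.assoc[symmetric] e2[symmetric]  by (simp add: algebra_simps power2_eq_square)

lemma core_Q:
  fixes s u b c :: "'a::field"
  assumes e1: "c + b = k" and e2: "c * s + b * u = th1 * t"
  shows "b * (u - s) = th1 * t - k * s"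
  unfolding e1[symmetric] e2[symmetric] by (simp add: algebra_simps)

lemma core_rec:
  fixes t b c :: "nat \<Rightarrow> 'a::field"
  assumes d3: "3 \<le> d" and k0: "k \<noteq> 0"
  and r0a: "k * t 1 = th1 * t 0" and r0b: "k * (t 1)^2 = tm * (t 0)^2 + lam * t 0 + mu"
  and rs: "\<And>j. 1 \<le> j \<Longrightarrow> j < d \<Longrightarrow> c j + b j = k"
  and ra: "\<And>j. 1 \<le> j \<Longrightarrow> j < d \<Longrightarrow> c j * t (j-1) + b j * t (j+1) = th1 * t j"
  and rb: "\<And>j. 1 \<le> j \<Longrightarrow> j < d \<Longrightarrow> c j * (t (j-1))^2 + b j * (t (j+1))^2 = tm * (t j)^2 + lam * t j + mu"
  and bnz: "\<And>j. 1 \<le> j \<Longrightarrow> j < d \<Longrightarrow> b j \<noteq> 0"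
  and inj: "inj_on t {..d}"
  shows "\<exists>be ga. \<forall>j. 1 \<le> j \<longrightarrow> j < d \<longrightarrow> t (j-1) + t (j+1) = be * t j + ga"
proof -
  have P: "th1 * t j * (t (j-1) + t (j+1)) - k * t (j-1) * t (j+1) = tm * (t j)^2 + lam * t j + mu"
    and nz: "k * t (j-1) \<noteq> th1 * t j" if j: "1 \<le> j" "j < d" for j
  proof -
    have e1: "c j + b j = k" and e2: "c j * t (j-1) + b j * t (j+1) = th1 * t j"
      and e3: "c j * (t (j-1))^2 + b j * (t (j+1))^2 = tm * (t j)^2 + lam * t j + mu"
      using rs[OF j] ra[OF j] rb[OF j] by auto
    show "th1 * t j * (t (j-1) + t (j+1)) - k * t (j-1) * t (j+1) = tm * (t j)^2 + lam * t j + mu"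
      using core_P[OF e1 e2 e3] .
    have "b j * (t (j+1) - t (j-1)) = th1 * t j - k * t (j-1)" using core_Q[OF e1 e2] .
    moreover have "t (j+1) \<noteq> t (j-1)" using inj j by (auto dest: inj_onD)
    ultimately show "k * t (j-1) \<noteq> th1 * t j" using bnz[OF j] by auto
  qed
  have th0: "th1 \<noteq> 0"
  proof
    assume "th1 = 0"
    with r0a k0 have "t 1 = 0" by simp
    with nz[of 2] d3 \<open>th1 = 0\<close> show False by simp
  qed
  have thk: "th1 + k \<noteq> 0"
  proof
    assume h: "th1 + k = 0"
    have e1: "c 1 + b 1 = k" and e2: "c 1 * t 0 + b 1 * t 2 = th1 * t 1"
      using rs[of 1] ra[of 1] d3 by (auto simp: numeral_2_eq_2)
    have "b 1 * (t 2 - t 0) = 0" using e1 e2 h r0a k0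
    proof -
      have th: "th1 = - k" using h by (simp add: eq_neg_iff_add_eq_0)
      have "k * (t 1 + t 0) = 0" using r0a unfolding th by (simp add: algebra_simps)
      hence t1: "t 1 = - t 0" using k0 by (simp add: eq_neg_iff_add_eq_0)
      have "b 1 * (t 2 - t 0) = th1 * t 1 - k * t 0" using core_Q[OF e1 e2] .
      thus ?thesis unfolding th t1 by simp
    qed
    hence "t 2 = t 0" using bnz[of 1] d3 by auto
    moreover have "t 2 \<noteq> t 0" using inj d3 by (auto dest: inj_onD)
    ultimately show False by simp
  qed
  define be where "be = (tm + k) / th1"
  define ga where "ga = lam / (th1 + k)"
  define de where "de = mu / k"
  have h1: "th1*be = tm + k" using th0 unfolding be_def by simp
  have h2: "ga*(th1+k) = lam" using thk unfolding ga_def by simp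
  have h3: "de*k = mu" using k0 unfolding de_def by simp
  have base: "(t 0)^2 - be*t 0*t 1 + (t 1)^2 - ga*(t 0+t 1) - de = 0"
  proof -
    have "k * ((t 0)^2 - be*t 0*t 1 + (t 1)^2 - ga*(t 0+t 1) - de)
        = k*(t 0)^2 - be*t 0*(k*t 1) + k*(t 1)^2 - ga*t 0*k - ga*(k*t 1) - de*k"
      by (simp add: algebra_simps power2_eq_square)
    also have "\<dots> = k*(t 0)^2 - be*t 0*(th1*t 0) + (tm * (t 0)^2 + lam * t 0 + mu) - ga*t 0*k - ga*(th1*t 0) - mu"
      unfolding r0a r0b h3 ..
    also have "\<dots> = k*(t 0)^2 - (th1*be)*(t 0)^2 + tm*(t 0)^2 + lam*t 0 - (ga*(th1+k))*t 0"
      by (simp add: algebra_simps power2_eq_square)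
    also have "\<dots> = 0" unfolding h1 h2 by (simp add: algebra_simps power2_eq_square)
    finally have "k * ((t 0)^2 - be*t 0*t 1 + (t 1)^2 - ga*(t 0+t 1) - de) = 0" .
    thus ?thesis using k0 by simp
  qed
  have B: "(t n)^2 - be*t n*t (n+1) + (t (n+1))^2 - ga*(t n+t (n+1)) - de = 0" if "n + 1 < d" for n
    using that
  proof (induction n)
    case 0 then show ?case using base by simp
  next
    case (Suc n)
    have j: "1 \<le> Suc n" "Suc n < d" using Suc.prems by auto
    have "(t n)^2 - be*t n*t (n+1) + (t (n+1))^2 - ga*(t n+t (n+1)) - de = 0" using Suc by simp
    from core_step[OF this, of th1 "t (n+2)" k tm lam mu, OF _ h1 h2 h3] P[OF j] nz[OF j]
    show ?case by (simp add: algebra_simps)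
  qed
  have "\<forall>j. 1 \<le> j \<longrightarrow> j < d \<longrightarrow> t (j-1) + t (j+1) = be * t j + ga"
  proof (intro allI impI)
    fix j assume j: "1 \<le> j" "j < d"
    then obtain n where n: "j = Suc n" by (cases j) auto
    have "(t n)^2 - be*t n*t (n+1) + (t (n+1))^2 - ga*(t n+t (n+1)) - de = 0" using B[of n] j n by simp
    from core_step[OF this, of th1 "t (n+2)" k tm lam mu, OF _ h1 h2 h3] P[OF j] nz[OF j] n
    show "t (j-1) + t (j+1) = be * t j + ga" by (simp add: algebra_simps)
  qed
  thus ?thesis by blast
qed

lemma final_rec:
  fixes t :: "nat \<Rightarrow> 'a::field"
  assumes "\<forall>j. 1 \<le> j \<longrightarrow> j < d \<longrightarrow> t (j-1) + t (j+1) = be * t j + ga"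
    and inj: "inj_on t {0..d}"
  shows "\<exists>c. \<forall>j. 3 \<le> j \<and> j \<le> d \<longrightarrow> (t j - t (j-3)) / (t (j-1) - t (j-2)) = c"
proof (intro exI allI impI)
  fix j assume j: "3 \<le> j \<and> j \<le> d"
  have a0: "t (j-1-1) + t (j-1+1) = be * t (j-1) + ga" using assms(1)[rule_format, of "j-1"] j by linarith
  have b0: "t (j-2-1) + t (j-2+1) = be * t (j-2) + ga" using assms(1)[rule_format, of "j-2"] j by linarith
  have e: "j-1-1 = j-2" "j-1+1 = j" "j-2-1 = j-3" "j-2+1 = j-1" using j by auto
  have a: "t (j-2) + t j = be * t (j-1) + ga" using a0 unfolding e .
  have b: "t (j-3) + t (j-1) = be * t (j-2) + ga" using b0 unfolding e .
  have ne: "t (j-1) - t (j-2) \<noteq> 0" using inj j by (auto dest: inj_onD)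
  have a': "t j = be * t (j-1) + ga - t (j-2)" using a by (simp add: algebra_simps)
  have b': "t (j-3) = be * t (j-2) + ga - t (j-1)" using b by (simp add: algebra_simps)
  have "t j - t (j-3) = (be + 1) * (t (j-1) - t (j-2))" unfolding a' b' by (simp add: algebra_simps)
  thus "(t j - t (j-3)) / (t (j-1) - t (j-2)) = be + 1" using ne by simp
qed



fun gfun :: "(nat \<Rightarrow> nat \<Rightarrow> 'a::field) \<Rightarrow> nat \<Rightarrow> 'a" where
  "gfun Y 0 = 1"
| "gfun Y (Suc i) = gfun Y i * Y i (Suc i) / Y (Suc i) i"

definition Ymul :: "nat \<Rightarrow> (nat \<Rightarrow> nat \<Rightarrow> 'a::field) \<Rightarrow> (nat \<Rightarrow> 'a) \<Rightarrow> nat \<Rightarrow> 'a" where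
  "Ymul d Y w i = (\<Sum>l\<le>d. Y i l * w l)"

definition ipf :: "nat \<Rightarrow> (nat \<Rightarrow> nat \<Rightarrow> 'a::field) \<Rightarrow> (nat \<Rightarrow> 'a) \<Rightarrow> (nat \<Rightarrow> 'a) \<Rightarrow> 'a" where
  "ipf d Y y w = (\<Sum>i\<le>d. gfun Y i * y i * w i)"

locale tri =
  fixes d :: nat and Y :: "nat \<Rightarrow> nat \<Rightarrow> 'a::field"
  assumes far: "\<And>i j. i \<le> d \<Longrightarrow> j \<le> d \<Longrightarrow> (i > j+1 \<or> j > i+1) \<Longrightarrow> Y i j = 0"
  and diag: "\<And>i. i \<le> d \<Longrightarrow> Y i i = 0"
  and nzb: "\<And>i. i < d \<Longrightarrow> Y i (i+1) \<noteq> 0"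
  and nzc: "\<And>i. i < d \<Longrightarrow> Y (i+1) i \<noteq> 0"
begin

abbreviation Ym where "Ym \<equiv> Ymul d Y"

abbreviation g where "g \<equiv> gfun Y"

abbreviation ip where "ip \<equiv> ipf d Y"

lemma g_nz: "i \<le> d \<Longrightarrow> g i \<noteq> 0"
proof (induction i)
  case 0 then show ?case by simp
next
  case (Suc i)
  then have "i < d" by simp
  with Suc nzb[of i] nzc[of i] show ?case by simp
qed

lemma g_sym: assumes "i \<le> d" "j \<le> d" shows "g i * Y i j = g j * Y j i"
proof -
  have "i = j \<or> i > j+1 \<or> j > i+1 \<or> j = i+1 \<or> i = j+1" by arith
  moreover
  { assume "j = i+1"
    hence ?thesis using assms nzc[of i] by simp }
  moreover
  { assume "i = j+1"
    hence ?thesis using assms nzc[of j] by simp }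
  ultimately show ?thesis using far assms by auto
qed

lemma ip_sym: "ip y w = ip w y"
  unfolding ipf_def by (simp add: algebra_simps)

lemma ip_Ym: "ip (Ym y) w = ip y (Ym w)"
proof -
  have "ip (Ym y) w = (\<Sum>i\<le>d. \<Sum>l\<le>d. g i * (Y i l * y l) * w i)"
    unfolding ipf_def Ymul_def by (simp add: sum_distrib_left sum_distrib_right)
  also have "\<dots> = (\<Sum>l\<le>d. \<Sum>i\<le>d. g i * (Y i l * y l) * w i)" by (rule sum.swap)
  also have "\<dots> = (\<Sum>l\<le>d. \<Sum>i\<le>d. g l * y l * (Y l i * w i))"
  proof (intro sum.cong refl)
    fix l i assume l: "l \<in> {..d}" and i: "i \<in> {..d}"
    have gs: "g i * Y i l = g l * Y l i" using g_sym l i by auto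
    have "g i * (Y i l * y l) * w i = (g i * Y i l) * (y l * w i)" by (simp add: ac_simps)
    also have "\<dots> = (g l * Y l i) * (y l * w i)" unfolding gs ..
    also have "\<dots> = g l * y l * (Y l i * w i)" by (simp add: ac_simps)
    finally show "g i * (Y i l * y l) * w i = g l * y l * (Y l i * w i)" .
  qed
  also have "\<dots> = ip y (Ym w)"
    unfolding ipf_def Ymul_def by (simp add: sum_distrib_left)
  finally show ?thesis .
qed

lemma Ym_row: assumes i: "i \<le> d"
  shows "Ym w i = (if 0 < i then Y i (i-1) * w (i-1) else 0) + (if i < d then Y i (i+1) * w (i+1) else 0)"
proof -
  have "Ym w i = (\<Sum>l\<le>d. (if l = i - 1 then (if 0 < i then Y i l * w l else 0) else 0)
                + (if l = i + 1 then Y i l * w l else 0))"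
    unfolding Ymul_def
  proof (intro sum.cong refl)
    fix l assume l: "l \<in> {..d}"
    show "Y i l * w l = (if l = i - 1 then (if 0 < i then Y i l * w l else 0) else 0)
                + (if l = i + 1 then Y i l * w l else 0)"
    proof (cases "l = i + 1")
      case True then show ?thesis by simp
    next
      case F1: False
      show ?thesis
      proof (cases "0 < i \<and> l = i - 1")
        case True then show ?thesis using F1 by simp
      next
        case F2: False
        have "Y i l = 0"
        proof (cases "l = i")
          case True then show ?thesis using diag i by simp
        next
          case False
          with F1 F2 have "i > l + 1 \<or> l > i + 1" by arith
          then show ?thesis using far[of i l] i l by simp
        qed
        then show ?thesis using F1 F2 by auto
      qed
    qed
  qed
  also have "\<dots> = (if 0 < i then Y i (i-1) * w (i-1) else 0) + (if i < d then Y i (i+1) * w (i+1) else 0)"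
    using i by (simp add: sum.distrib; linarith)
  finally show ?thesis .
qed

lemma Ym_sum: "Ym (\<lambda>l. \<Sum>j\<in>S. c j * f j l) i = (\<Sum>j\<in>S. c j * Ym (f j) i)"
proof -
  have "Ym (\<lambda>l. \<Sum>j\<in>S. c j * f j l) i = (\<Sum>l\<le>d. \<Sum>j\<in>S. c j * (Y i l * f j l))"
    unfolding Ymul_def by (simp add: sum_distrib_left mult.left_commute)
  also have "\<dots> = (\<Sum>j\<in>S. \<Sum>l\<le>d. c j * (Y i l * f j l))" by (rule sum.swap)
  also have "\<dots> = (\<Sum>j\<in>S. c j * Ym (f j) i)"
    unfolding Ymul_def by (simp add: sum_distrib_left)
  finally show ?thesis .
qed

end

locale tri_eig = tri +
  fixes th :: "nat \<Rightarrow> 'a" and z :: "nat \<Rightarrow> nat \<Rightarrow> 'a"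
  assumes eig: "\<And>j i. j \<le> d \<Longrightarrow> i \<le> d \<Longrightarrow> Ym (z j) i = th j * z j i"
  and znz: "\<And>j. j \<le> d \<Longrightarrow> \<exists>i\<le>d. z j i \<noteq> 0"
  and thinj: "inj_on th {..d}"
begin

lemma indep: "finite S \<Longrightarrow> S \<subseteq> {..d} \<Longrightarrow> (\<forall>i\<le>d. (\<Sum>j\<in>S. c j * z j i) = 0) \<Longrightarrow> \<forall>j\<in>S. c j = 0"
proof (induction S arbitrary: c rule: finite_induct)
  case empty then show ?case by simp
next
  case (insert m S)
  have m: "m \<le> d" and Sd: "S \<subseteq> {..d}" using insert.prems by auto
  have h: "\<forall>i\<le>d. c m * z m i + (\<Sum>j\<in>S. c j * z j i) = 0"
  proof (intro allI impI)
    fix i assume "i \<le> d"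
    hence "(\<Sum>j\<in>insert m S. c j * z j i) = 0" using insert.prems(2) by blast
    thus "c m * z m i + (\<Sum>j\<in>S. c j * z j i) = 0" unfolding sum.insert[OF insert.hyps] .
  qed
  have h2: "\<forall>i\<le>d. (\<Sum>j\<in>S. (c j * (th j - th m)) * z j i) = 0"
  proof (intro allI impI)
    fix i assume i: "i \<le> d"
    have "Ym (\<lambda>l. \<Sum>j\<in>insert m S. c j * z j l) i = 0"
      unfolding Ymul_def using insert.prems(2) by (simp add: sum.neutral)
    hence "(\<Sum>j\<in>insert m S. c j * Ym (z j) i) = 0" by (simp add: Ym_sum)
    moreover have "\<forall>j\<in>insert m S. Ym (z j) i = th j * z j i"
      using insert.prems(1) i eig by auto
    ultimately have "(\<Sum>j\<in>insert m S. c j * (th j * z j i)) = 0"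
      by (smt (verit) sum.cong)
    hence e1: "c m * (th m * z m i) + (\<Sum>j\<in>S. c j * (th j * z j i)) = 0"
      unfolding sum.insert[OF insert.hyps] .
    have e2: "th m * (c m * z m i) + th m * (\<Sum>j\<in>S. c j * z j i) = 0" using h i
      by (simp add: distrib_left[symmetric])
    have "(\<Sum>j\<in>S. c j * (th j * z j i)) - th m * (\<Sum>j\<in>S. c j * z j i)
       = (c m * (th m * z m i) + (\<Sum>j\<in>S. c j * (th j * z j i))) - (th m * (c m * z m i) + th m * (\<Sum>j\<in>S. c j * z j i))"
      by (simp add: algebra_simps)
    hence "(\<Sum>j\<in>S. c j * (th j * z j i)) - th m * (\<Sum>j\<in>S. c j * z j i) = 0"
      unfolding e1 e2 by simp
    thus "(\<Sum>j\<in>S. (c j * (th j - th m)) * z j i) = 0"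
      by (simp add: sum_distrib_left sum_subtractf[symmetric] algebra_simps)
  qed
  from insert.IH[OF Sd h2] have "\<forall>j\<in>S. c j * (th j - th m) = 0" .
  moreover have "\<forall>j\<in>S. th j \<noteq> th m" using thinj Sd m insert.hyps(2)
    by (auto dest: inj_onD)
  ultimately have cS: "\<forall>j\<in>S. c j = 0" by auto
  hence "\<forall>i\<le>d. c m * z m i = 0" using h by simp
  moreover obtain i where "i \<le> d" "z m i \<noteq> 0" using znz[OF m] by auto
  ultimately have "c m = 0" by auto
  with cS show ?case by auto
qed

lemma span: "\<exists>a. \<forall>i\<le>d. y i = (\<Sum>j\<le>d. a j * z j i)"
proof -
  define Z where "Z = mat (d+1) (d+1) (\<lambda>(i,j). z j i)"
  have Zc: "Z \<in> carrier_mat (d+1) (d+1)" unfolding Z_def by simp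
  have Zv: "(Z *\<^sub>v v) $ i = (\<Sum>j\<le>d. v $ j * z j i)" if "i \<le> d" "v \<in> carrier_vec (d+1)" for i v
    using that unfolding Z_def
    by (auto simp: scalar_prod_def row_def lessThan_Suc_atMost[symmetric] atLeast0LessThan mult.commute intro!: sum.cong)
  have "det Z \<noteq> 0"
  proof
    assume "det Z = 0"
    then obtain v where v: "v \<in> carrier_vec (d+1)" "v \<noteq> 0\<^sub>v (d+1)" "Z *\<^sub>v v = 0\<^sub>v (d+1)"
      using det_0_iff_vec_prod_zero_field[OF Zc] by auto
    have "\<forall>i\<le>d. (\<Sum>j\<in>{..d}. v $ j * z j i) = 0"
    proof (intro allI impI)
      fix i assume "i \<le> d"
      have "(Z *\<^sub>v v) $ i = 0" using v(3) \<open>i \<le> d\<close> by simp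
      with Zv[OF \<open>i \<le> d\<close> v(1)] show "(\<Sum>j\<in>{..d}. v $ j * z j i) = 0" by simp
    qed
    from indep[OF _ _ this] have "\<forall>j\<le>d. v $ j = 0" by auto
    hence "v = 0\<^sub>v (d+1)" using v(1) by (intro eq_vecI) auto
    with v(2) show False by simp
  qed
  from det_non_zero_imp_unit[OF Zc this, of "()"] obtain B where
    B: "B \<in> carrier_mat (d+1) (d+1)" "Z * B = 1\<^sub>m (d+1)"
    unfolding Units_def ring_mat_def by auto
  define yv where "yv = vec (d+1) y"
  define a where "a = B *\<^sub>v yv"
  have ac: "a \<in> carrier_vec (d+1)" unfolding a_def yv_def using B by simp
  have "Z *\<^sub>v a = yv" unfolding a_def using B Zc
    by (simp add: assoc_mult_mat_vec[symmetric, of Z "d+1" "d+1" B "d+1"] yv_def)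
  hence "\<forall>i\<le>d. y i = (\<Sum>j\<le>d. a $ j * z j i)"
  proof (intro allI impI)
    fix i assume i: "i \<le> d" and h: "Z *\<^sub>v a = yv"
    have "y i = (Z *\<^sub>v a) $ i" using h i unfolding yv_def by simp
    thus "y i = (\<Sum>j\<le>d. a $ j * z j i)" using Zv[OF i ac] by simp
  qed
  thus ?thesis by blast
qed

lemma orth: assumes "a \<le> d" "b \<le> d" "a \<noteq> b" shows "ip (z a) (z b) = 0"
proof -
  have "ip (Ym (z a)) (z b) = th a * ip (z a) (z b)"
    unfolding ipf_def using eig[OF assms(1)] by (simp add: sum_distrib_left algebra_simps)
  moreover have "ip (z a) (Ym (z b)) = th b * ip (z a) (z b)"
    unfolding ipf_def using eig[OF assms(2)] by (simp add: sum_distrib_left algebra_simps)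
  moreover have "th a \<noteq> th b" using thinj assms by (auto dest: inj_onD)
  ultimately show ?thesis using ip_Ym[of "z a" "z b"] by auto
qed

lemma coeff: assumes "\<forall>i\<le>d. y i = (\<Sum>l\<le>d. a l * z l i)" "j \<le> d"
  shows "ip y (z j) = a j * ip (z j) (z j)"
proof -
  have "ip y (z j) = (\<Sum>i\<le>d. \<Sum>l\<le>d. g i * (a l * z l i) * z j i)"
    unfolding ipf_def using assms(1) by (simp add: sum_distrib_left sum_distrib_right)
  also have "\<dots> = (\<Sum>l\<le>d. a l * ip (z l) (z j))"
    unfolding ipf_def by (subst sum.swap) (simp add: sum_distrib_left algebra_simps)
  also have "\<dots> = a j * ip (z j) (z j)"
    using assms(2) orth by (subst sum.remove[of _ j]) (auto intro!: sum.neutral)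
  finally show ?thesis .
qed

lemma ipnz: assumes j: "j \<le> d" shows "ip (z j) (z j) \<noteq> 0"
proof
  assume h: "ip (z j) (z j) = 0"
  have "g i * z j i = 0" if i: "i \<le> d" for i
  proof -
    obtain a where a: "\<forall>r\<le>d. (\<lambda>r. if r = i then 1 else 0) r = (\<Sum>l\<le>d. a l * z l r)"
      using span[of "\<lambda>r. if r = i then 1 else 0"] by (elim exE) (rule that)
    have "ip (\<lambda>r. if r = i then 1 else 0) (z j) = 0" using coeff[OF a j] h by simp
    moreover have "ip (\<lambda>r. if r = i then 1 else 0) (z j) = (\<Sum>r\<le>d. if r = i then g r * z j r else 0)"
      unfolding ipf_def by (intro sum.cong refl) simp
    ultimately show ?thesis using i by simp
  qed
  hence "\<forall>i\<le>d. z j i = 0" using g_nz by auto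
  with znz[OF j] show False by auto
qed

end



locale bridge =
  fixes d :: nat and Es :: "nat \<Rightarrow> 'a::field mat" and A :: "'a mat"
    and v :: "nat \<Rightarrow> 'a vec" and Y :: "nat \<Rightarrow> nat \<Rightarrow> 'a"
  assumes Es_car: "\<And>i. i \<le> d \<Longrightarrow> Es i \<in> carrier_mat (d+1) (d+1)"
  and Es_mult: "\<And>i j. i \<le> d \<Longrightarrow> j \<le> d \<Longrightarrow> Es i * Es j = (if i = j then Es i else 0\<^sub>m (d+1) (d+1))"
  and A_car: "A \<in> carrier_mat (d+1) (d+1)"
  and v_car: "\<And>i. i \<le> d \<Longrightarrow> v i \<in> carrier_vec (d+1)"
  and v_in: "\<And>i. i \<le> d \<Longrightarrow> \<exists>w\<in>carrier_vec (d+1). v i = Es i *\<^sub>v w"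
  and ind: "\<And>c. (\<forall>k<d+1. (\<Sum>i\<le>d. c i * (v i $ k)) = 0) \<Longrightarrow> \<forall>i\<le>d. c i = 0"
  and spn: "\<And>w. w \<in> carrier_vec (d+1) \<Longrightarrow> \<exists>c. \<forall>k<d+1. w $ k = (\<Sum>i\<le>d. c i * (v i $ k))"
  and Yv: "\<And>j k. j \<le> d \<Longrightarrow> k < d+1 \<Longrightarrow> (A *\<^sub>v v j) $ k = (\<Sum>i\<le>d. Y i j * (v i $ k))"
begin

definition vc :: "(nat \<Rightarrow> 'a) \<Rightarrow> 'a vec" where
  "vc z = vec (d+1) (\<lambda>k. \<Sum>i\<le>d. z i * (v i $ k))"

lemma mvk: assumes "(M :: 'a mat) \<in> carrier_mat n n" "w \<in> carrier_vec n" "k < n"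
  shows "(M *\<^sub>v w) $ k = (\<Sum>l<n. M $$ (k,l) * w $ l)"
  using assms by (auto simp: scalar_prod_def atLeast0LessThan intro!: sum.cong)

lemma mat_unit: assumes "(M :: 'a mat) \<in> carrier_mat n n" "k < n" "r < n" shows "(M *\<^sub>v unit_vec n k) $ r = M $$ (r,k)"
proof -
  have "(M *\<^sub>v unit_vec n k) $ r = (\<Sum>l<n. M $$ (r,l) * unit_vec n k $ l)"
    by (rule mvk[OF assms(1) unit_vec_carrier assms(3)])
  also have "\<dots> = (\<Sum>l<n. if l = k then M $$ (r,l) else 0)"
    using assms(2) by (intro sum.cong refl) auto
  also have "\<dots> = M $$ (r,k)" using assms(2) by simp
  finally show ?thesis .
qed

lemma v_dim[simp]: "i \<le> d \<Longrightarrow> dim_vec (v i) = d+1"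
  using v_car by (simp add: carrier_vecD)

lemma zero_mv[simp]: "w \<in> carrier_vec n \<Longrightarrow> 0\<^sub>m m n *\<^sub>v w = 0\<^sub>v m"
  by (intro eq_vecI) (auto simp: scalar_prod_def)

lemma vc_car[simp]: "vc z \<in> carrier_vec (d+1)"
  unfolding vc_def by simp

lemma vc_dim[simp]: "dim_vec (vc z) = d+1"
  unfolding vc_def by simp

lemma vc_idx[simp]: "k < d+1 \<Longrightarrow> vc z $ k = (\<Sum>i\<le>d. z i * (v i $ k))"
  unfolding vc_def by simp

lemma vc_eq0: assumes "vc z = 0\<^sub>v (d+1)" "i \<le> d" shows "z i = 0"
proof -
  have "\<forall>k<d+1. (\<Sum>i\<le>d. z i * (v i $ k)) = 0"
  proof (intro allI impI)
    fix k assume k: "k < d+1"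
    have "vc z $ k = 0" using assms(1) k by simp
    thus "(\<Sum>i\<le>d. z i * (v i $ k)) = 0" using vc_idx[OF k] by simp
  qed
  from ind[OF this] assms(2) show ?thesis by simp
qed

lemma vc_inj: assumes "vc z = vc z'" "i \<le> d" shows "z i = z' i"
proof -
  have "vc (\<lambda>i. z i - z' i) = 0\<^sub>v (d+1)"
  proof (rule eq_vecI)
    fix k assume "k < dim_vec (0\<^sub>v (d+1) :: 'a vec)"
    hence k: "k < d+1" by simp
    have "vc z $ k = vc z' $ k" using assms(1) by simp
    hence "(\<Sum>i\<le>d. z i * (v i $ k)) = (\<Sum>i\<le>d. z' i * (v i $ k))" using vc_idx[OF k] by simp
    hence "(\<Sum>i\<le>d. (z i - z' i) * (v i $ k)) = 0"
      by (simp add: left_diff_distrib sum_subtractf)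
    thus "vc (\<lambda>i. z i - z' i) $ k = 0\<^sub>v (d+1) $ k" using vc_idx[OF k] k by simp
  qed simp
  from vc_eq0[OF this assms(2)] show ?thesis by simp
qed

lemma vc_surj: assumes "w \<in> carrier_vec (d+1)" shows "\<exists>z. w = vc z"
proof -
  obtain c where c: "\<forall>k<d+1. w $ k = (\<Sum>i\<le>d. c i * (v i $ k))" using spn[OF assms] by blast
  have "w = vc c" using assms c by (intro eq_vecI) (auto simp: vc_idx)
  thus ?thesis by blast
qed

lemma vc_delta: assumes j: "j \<le> d" shows "vc (\<lambda>i. if i = j then a else 0) = a \<cdot>\<^sub>v v j"
proof (rule eq_vecI)
  have dj: "dim_vec (v j) = d+1" using v_car[OF j] by simp
  fix k assume "k < dim_vec (a \<cdot>\<^sub>v v j)"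
  hence k: "k < d+1" using dj by simp
  have "vc (\<lambda>i. if i = j then a else 0) $ k = (\<Sum>i\<le>d. if i = j then a * v i $ k else 0)"
    using k by (intro trans[OF vc_idx[OF k]] sum.cong refl) simp
  also have "\<dots> = a * v j $ k" using j by simp
  finally show "vc (\<lambda>i. if i = j then a else 0) $ k = (a \<cdot>\<^sub>v v j) $ k" using k dj by simp
qed (use v_car[OF j] in simp)

lemma mv_vc: assumes M: "M \<in> carrier_mat (d+1) (d+1)"
  shows "M *\<^sub>v vc z = vec (d+1) (\<lambda>k. \<Sum>i\<le>d. z i * (M *\<^sub>v v i) $ k)"
proof (rule eq_vecI)
  fix k assume "k < dim_vec (vec (d+1) (\<lambda>k. \<Sum>i\<le>d. z i * (M *\<^sub>v v i) $ k))"
  hence k: "k < d+1" by simp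
  have "(M *\<^sub>v vc z) $ k = (\<Sum>l<d+1. M $$ (k,l) * (\<Sum>i\<le>d. z i * (v i $ l)))"
    using mvk[OF M vc_car k] by simp
  also have "\<dots> = (\<Sum>l<d+1. \<Sum>i\<le>d. z i * (M $$ (k,l) * v i $ l))"
    by (simp add: sum_distrib_left mult.left_commute)
  also have "\<dots> = (\<Sum>i\<le>d. \<Sum>l<d+1. z i * (M $$ (k,l) * v i $ l))" by (rule sum.swap)
  also have "\<dots> = (\<Sum>i\<le>d. z i * (\<Sum>l<d+1. M $$ (k,l) * v i $ l))"
    by (simp only: sum_distrib_left)
  also have "\<dots> = (\<Sum>i\<le>d. z i * (M *\<^sub>v v i) $ k)"
    using mvk[OF M v_car k] by (intro sum.cong refl) simp
  finally show "(M *\<^sub>v vc z) $ k = vec (d+1) (\<lambda>k. \<Sum>i\<le>d. z i * (M *\<^sub>v v i) $ k) $ k" using k by simp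
qed (use M in simp)

lemma Es_v: assumes "i \<le> d" "l \<le> d" shows "Es l *\<^sub>v v i = (if l = i then v i else 0\<^sub>v (d+1))"
proof -
  obtain w where w: "w \<in> carrier_vec (d+1)" "v i = Es i *\<^sub>v w" using v_in[OF assms(1)] by blast
  have "Es l *\<^sub>v v i = (Es l * Es i) *\<^sub>v w"
    using assoc_mult_mat_vec[OF Es_car[OF assms(2)] Es_car[OF assms(1)] w(1)] w(2) by simp
  also have "\<dots> = (if l = i then v i else 0\<^sub>v (d+1))" using Es_mult[OF assms(2,1)] w by auto
  finally show ?thesis .
qed

lemma Es_vc: assumes l: "l \<le> d" shows "Es l *\<^sub>v vc z = vc (\<lambda>i. if i = l then z l else 0)"
proof -
  have "Es l *\<^sub>v vc z = vec (d+1) (\<lambda>k. \<Sum>i\<le>d. z i * (Es l *\<^sub>v v i) $ k)"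
    using mv_vc[OF Es_car[OF l]] .
  also have "\<dots> = z l \<cdot>\<^sub>v v l"
  proof (rule eq_vecI)
    fix k assume "k < dim_vec (z l \<cdot>\<^sub>v v l)"
    hence k: "k < d+1" using v_car[OF l] by simp
    have "(\<Sum>i\<le>d. z i * (Es l *\<^sub>v v i) $ k) = (\<Sum>i\<le>d. if i = l then z l * v l $ k else 0)"
      using k Es_v[OF _ l] by (intro sum.cong refl) auto
    also have "\<dots> = z l * v l $ k" using l by simp
    finally show "vec (d+1) (\<lambda>k. \<Sum>i\<le>d. z i * (Es l *\<^sub>v v i) $ k) $ k = (z l \<cdot>\<^sub>v v l) $ k"
      using k v_car[OF l] by simp
  qed (use v_car[OF l] in simp)
  also have "\<dots> = vc (\<lambda>i. if i = l then z l else 0)" using vc_delta[OF l] by simp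
  finally show ?thesis .
qed

lemma Av_col: assumes j: "j \<le> d" shows "A *\<^sub>v v j = vc (\<lambda>i. Y i j)"
  using A_car v_car[OF j] Yv[OF j] by (intro eq_vecI) auto

lemma A_vc: "A *\<^sub>v vc z = vc (Ymul d Y z)"
proof (rule eq_vecI)
  fix k assume "k < dim_vec (vc (Ymul d Y z))"
  hence k: "k < d+1" by simp
  have "(A *\<^sub>v vc z) $ k = (\<Sum>j\<le>d. z j * (\<Sum>i\<le>d. Y i j * (v i $ k)))"
    using mv_vc[OF A_car] k Yv by simp
  also have "\<dots> = (\<Sum>j\<le>d. \<Sum>i\<le>d. (Y i j * z j) * (v i $ k))"
    by (simp add: sum_distrib_left mult_ac)
  also have "\<dots> = (\<Sum>i\<le>d. \<Sum>j\<le>d. (Y i j * z j) * (v i $ k))" by (rule sum.swap)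
  also have "\<dots> = (\<Sum>i\<le>d. Ymul d Y z i * (v i $ k))"
    unfolding Ymul_def by (simp add: sum_distrib_right)
  finally show "(A *\<^sub>v vc z) $ k = vc (Ymul d Y z) $ k" using k by simp
qed (use A_car in simp)

lemma As_vc: "dual_comb d ths Es *\<^sub>v vc z = vc (\<lambda>i. ths i * z i)"
proof (rule eq_vecI)
  fix k assume "k < dim_vec (vc (\<lambda>i. ths i * z i))"
  hence k: "k < d+1" by simp
  have Dc: "dual_comb d ths Es \<in> carrier_mat (d+1) (d+1)" unfolding dual_comb_def by simp
  have "(dual_comb d ths Es *\<^sub>v vc z) $ k = (\<Sum>l<d+1. (\<Sum>i\<le>d. ths i * Es i $$ (k,l)) * vc z $ l)"
    using mvk[OF Dc vc_car k] k unfolding dual_comb_def by simp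
  also have "\<dots> = (\<Sum>l<d+1. \<Sum>i\<le>d. ths i * (Es i $$ (k,l) * vc z $ l))"
    by (simp only: sum_distrib_right mult.assoc)
  also have "\<dots> = (\<Sum>i\<le>d. \<Sum>l<d+1. ths i * (Es i $$ (k,l) * vc z $ l))"
    by (rule sum.swap)
  also have "\<dots> = (\<Sum>i\<le>d. ths i * (\<Sum>l<d+1. Es i $$ (k,l) * vc z $ l))"
    by (simp only: sum_distrib_left)
  also have "\<dots> = (\<Sum>i\<le>d. ths i * (Es i *\<^sub>v vc z) $ k)"
    using mvk[OF Es_car vc_car k] by (intro sum.cong refl) simp
  also have "\<dots> = (\<Sum>i\<le>d. ths i * (z i * v i $ k))"
    using Es_vc vc_delta k v_car by (intro sum.cong refl) simp
  finally show "(dual_comb d ths Es *\<^sub>v vc z) $ k = vc (\<lambda>i. ths i * z i) $ k" using k by (simp add: mult_ac)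
qed (simp add: dual_comb_def)

lemma mat_zero: assumes M: "M \<in> carrier_mat (d+1) (d+1)" and h: "\<And>z. M *\<^sub>v vc z = 0\<^sub>v (d+1)"
  shows "M = 0\<^sub>m (d+1) (d+1)"
proof (rule eq_matI)
  fix r c assume rc: "r < dim_row (0\<^sub>m (d+1) (d+1) :: 'a mat)" "c < dim_col (0\<^sub>m (d+1) (d+1) :: 'a mat)"
  obtain z where z: "unit_vec (d+1) c = vc z" using vc_surj[of "unit_vec (d+1) c"] by auto
  have "M $$ (r,c) = (M *\<^sub>v unit_vec (d+1) c) $ r" using M rc by simp
  also have "\<dots> = 0" unfolding z h using rc by simp
  finally show "M $$ (r,c) = 0\<^sub>m (d+1) (d+1) $$ (r,c)" using rc by simp
qed (use M in auto)

lemma EAE_vc: assumes "i \<le> d" "j \<le> d"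
  shows "(Es i * A * Es j) *\<^sub>v vc z = vc (\<lambda>r. if r = i then Y i j * z j else 0)"
proof -
  have c1: "Es i * A \<in> carrier_mat (d+1) (d+1)" using Es_car[OF assms(1)] A_car by simp
  have c2: "Es j *\<^sub>v vc z \<in> carrier_vec (d+1)" by (rule mult_mat_vec_carrier[OF Es_car[OF assms(2)] vc_car])
  have "(Es i * A * Es j) *\<^sub>v vc z = (Es i * A) *\<^sub>v (Es j *\<^sub>v vc z)"
    by (rule assoc_mult_mat_vec[OF c1 Es_car[OF assms(2)] vc_car])
  also have "\<dots> = Es i *\<^sub>v (A *\<^sub>v (Es j *\<^sub>v vc z))"
    by (rule assoc_mult_mat_vec[OF Es_car[OF assms(1)] A_car c2])
  finally have "(Es i * A * Es j) *\<^sub>v vc z = Es i *\<^sub>v (A *\<^sub>v (Es j *\<^sub>v vc z))" .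
  also have "\<dots> = vc (\<lambda>r. if r = i then Y i j * z j else 0)"
    unfolding Es_vc[OF assms(2)] A_vc Es_vc[OF assms(1)]
    by (rule arg_cong[where f = vc]) (auto simp: Ymul_def if_distrib assms cong: if_cong)
  finally show ?thesis .
qed

lemma Y_zero_from: assumes "i \<le> d" "j \<le> d" "Es i * A * Es j = 0\<^sub>m (d+1) (d+1)" shows "Y i j = 0"
proof -
  have "(Es i * A * Es j) *\<^sub>v vc (\<lambda>r. if r = j then 1 else 0) = 0\<^sub>v (d+1)"
    unfolding assms(3) by (rule zero_mv[OF vc_car])
  hence "vc (\<lambda>r. if r = i then Y i j * (if j = j then 1 else 0) else 0) = 0\<^sub>v (d+1)"
    unfolding EAE_vc[OF assms(1,2)] .
  from vc_eq0[OF this assms(1)] show ?thesis by simp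
qed

lemma Y_zero_to: assumes "i \<le> d" "j \<le> d" "Y i j = 0" shows "Es i * A * Es j = 0\<^sub>m (d+1) (d+1)"
proof (rule mat_zero)
  show "Es i * A * Es j \<in> carrier_mat (d+1) (d+1)"
    using Es_car[OF assms(1)] Es_car[OF assms(2)] A_car by (intro mult_carrier_mat) auto
  fix z
  have "(\<lambda>r. if r = i then Y i j * z j else 0) = (\<lambda>r. 0)" using assms(3) by auto
  hence "vc (\<lambda>r. if r = i then Y i j * z j else 0) = vc (\<lambda>r. 0)" by simp
  also have "vc (\<lambda>r. 0) = 0\<^sub>v (d+1)" by (intro eq_vecI) auto
  finally show "(Es i * A * Es j) *\<^sub>v vc z = 0\<^sub>v (d+1)" using EAE_vc[OF assms(1,2)] by simp
qed

lemma trace_EA: assumes i: "i \<le> d" shows "mat_trace (Es i * A) = Y i i"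
proof -
  have "\<forall>k. \<exists>z. k < d+1 \<longrightarrow> unit_vec (d+1) k = vc z" using vc_surj by auto
  then obtain u where u: "\<And>k. k < d+1 \<Longrightarrow> unit_vec (d+1) k = vc (u k)" by metis
  have key: "(\<Sum>k<d+1. v i $ k * u k l) = (if l = i then 1 else 0)" if l: "l \<le> d" for l
  proof -
    have "vc (\<lambda>l. \<Sum>k<d+1. v i $ k * u k l) = vc (\<lambda>l. if l = i then 1 else 0)"
    proof (rule eq_vecI)
      fix r assume "r < dim_vec (vc (\<lambda>l. if l = i then 1 else 0))"
      hence r: "r < d+1" by simp
      have "vc (\<lambda>l. \<Sum>k<d+1. v i $ k * u k l) $ r = (\<Sum>l\<le>d. (\<Sum>k<d+1. v i $ k * u k l) * v l $ r)"
        using r by simp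
      also have "\<dots> = (\<Sum>l\<le>d. \<Sum>k<d+1. v i $ k * (u k l * v l $ r))"
        by (simp only: sum_distrib_right mult.assoc)
      also have "\<dots> = (\<Sum>k<d+1. \<Sum>l\<le>d. v i $ k * (u k l * v l $ r))" by (rule sum.swap)
      also have "\<dots> = (\<Sum>k<d+1. v i $ k * vc (u k) $ r)"
        using r by (simp only: sum_distrib_left vc_idx)
      also have "\<dots> = (\<Sum>k<d+1. v i $ k * unit_vec (d+1) k $ r)"
        using u by (intro sum.cong refl) simp
      also have "\<dots> = (\<Sum>k<d+1. if k = r then v i $ k else 0)"
        using r by (intro sum.cong refl) auto
      also have "\<dots> = v i $ r" using r by simp
      also have "\<dots> = vc (\<lambda>l. if l = i then 1 else 0) $ r" using vc_delta[OF i, of 1] r i by simp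
      finally show "vc (\<lambda>l. \<Sum>k<d+1. v i $ k * u k l) $ r = vc (\<lambda>l. if l = i then 1 else 0) $ r" .
    qed simp
    from vc_inj[OF this l] show ?thesis .
  qed
  have diag: "(Es i * A) $$ (k,k) = Ymul d Y (u k) i * v i $ k" if k: "k < d+1" for k
  proof -
    have c1: "Es i * A \<in> carrier_mat (d+1) (d+1)" using Es_car[OF i] A_car by simp
    have "(Es i * A) $$ (k,k) = ((Es i * A) *\<^sub>v unit_vec (d+1) k) $ k"
      using mat_unit[OF c1 k k] by simp
    also have "\<dots> = (Es i *\<^sub>v (A *\<^sub>v vc (u k))) $ k"
      unfolding u[OF k] by (subst assoc_mult_mat_vec[OF Es_car[OF i] A_car vc_car]) simp
    also have "\<dots> = vc (\<lambda>r. if r = i then Ymul d Y (u k) i else 0) $ k"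
      unfolding A_vc Es_vc[OF i] ..
    also have "\<dots> = Ymul d Y (u k) i * v i $ k" using vc_delta[OF i] k i by simp
    finally show ?thesis .
  qed
  have "mat_trace (Es i * A) = (\<Sum>k<d+1. Ymul d Y (u k) i * v i $ k)"
    unfolding mat_trace_def using Es_car[OF i] A_car diag by (intro sum.cong) auto
  also have "\<dots> = (\<Sum>k<d+1. \<Sum>l\<le>d. Y i l * (v i $ k * u k l))"
    unfolding Ymul_def by (intro sum.cong refl) (simp add: sum_distrib_left sum_distrib_right mult_ac)
  also have "\<dots> = (\<Sum>l\<le>d. \<Sum>k<d+1. Y i l * (v i $ k * u k l))" by (rule sum.swap)
  also have "\<dots> = (\<Sum>l\<le>d. Y i l * (if l = i then 1 else 0))"
    using key by (simp only: sum_distrib_left[symmetric]) simp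
  also have "\<dots> = (\<Sum>l\<le>d. if l = i then Y i l else 0)" by (intro sum.cong refl) simp
  also have "\<dots> = Y i i" using i by simp
  finally show ?thesis .
qed

lemma vc_cong: "(\<And>i. i \<le> d \<Longrightarrow> z i = z' i) \<Longrightarrow> vc z = vc z'"
  unfolding vc_def by (intro eq_vecI) (auto intro!: sum.cong)

lemma vc_zero: "vc (\<lambda>i. 0) = 0\<^sub>v (d+1)"
  by (intro eq_vecI) auto

lemma smult_vc: "c \<cdot>\<^sub>v vc z = vc (\<lambda>i. c * z i)"
  by (intro eq_vecI) (auto simp: sum_distrib_left mult_ac)

lemma vc_nz: assumes "i \<le> d" "z i \<noteq> 0" shows "vc z \<noteq> 0\<^sub>v (d+1)"
  using vc_eq0 assms by blast

lemma lin_vc: assumes M: "M \<in> carrier_mat (d+1) (d+1)"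
  shows "M *\<^sub>v vc (\<lambda>i. \<Sum>j\<in>S. a j * f j i) = vec (d+1) (\<lambda>k. \<Sum>j\<in>S. a j * (M *\<^sub>v vc (f j)) $ k)"
proof (rule eq_vecI)
  fix k assume "k < dim_vec (vec (d+1) (\<lambda>k. \<Sum>j\<in>S. a j * (M *\<^sub>v vc (f j)) $ k))"
  hence k: "k < d+1" by simp
  have "(M *\<^sub>v vc (\<lambda>i. \<Sum>j\<in>S. a j * f j i)) $ k = (\<Sum>i\<le>d. (\<Sum>j\<in>S. a j * f j i) * (M *\<^sub>v v i) $ k)"
    using mv_vc[OF M] k by simp
  also have "\<dots> = (\<Sum>i\<le>d. \<Sum>j\<in>S. a j * (f j i * (M *\<^sub>v v i) $ k))"
    by (simp only: sum_distrib_right mult.assoc)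
  also have "\<dots> = (\<Sum>j\<in>S. \<Sum>i\<le>d. a j * (f j i * (M *\<^sub>v v i) $ k))" by (rule sum.swap)
  also have "\<dots> = (\<Sum>j\<in>S. a j * (M *\<^sub>v vc (f j)) $ k)"
    using mv_vc[OF M] k by (simp add: sum_distrib_left)
  finally show "(M *\<^sub>v vc (\<lambda>i. \<Sum>j\<in>S. a j * f j i)) $ k = vec (d+1) (\<lambda>k. \<Sum>j\<in>S. a j * (M *\<^sub>v vc (f j)) $ k) $ k"
    using k by simp
qed (use M in simp)

end



lemma sum_two:
  fixes h :: "nat \<Rightarrow> 'a::comm_monoid_add"
  assumes "1 \<le> d" "\<And>l. 2 \<le> l \<Longrightarrow> l \<le> d \<Longrightarrow> h l = 0"
  shows "(\<Sum>l\<le>d. h l) = h 0 + h 1"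
proof -
  have "(\<Sum>l\<le>d. h l) = (\<Sum>l\<in>{0,1}. h l)"
    using assms by (intro sum.mono_neutral_right) auto
  thus ?thesis by simp
qed

lemma sum_three:
  fixes h :: "nat \<Rightarrow> 'a::comm_monoid_add"
  assumes "2 \<le> m" "m \<le> d" "\<And>l. 2 \<le> l \<Longrightarrow> l \<le> d \<Longrightarrow> l \<noteq> m \<Longrightarrow> h l = 0"
  shows "(\<Sum>l\<le>d. h l) = h 0 + h 1 + h m"
proof -
  have "(\<Sum>l\<le>d. h l) = (\<Sum>l\<in>{0,1,m}. h l)"
    using assms by (intro sum.mono_neutral_right) auto
  thus ?thesis using assms by (simp add: add_ac)
qed

locale mainloc = bridge d Es A v Y for d Es A v Y +
  fixes E :: "nat \<Rightarrow> 'a mat" and th ths :: "nat \<Rightarrow> 'a"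
  assumes d3: "3 \<le> d"
  and tri0: "\<forall>i\<le>d. \<forall>j\<le>d. (i > j + 1 \<or> j > i + 1) \<longrightarrow> Es i * A * Es j = 0\<^sub>m (d+1) (d+1)"
  and tri1: "\<forall>i\<le>d. \<forall>j\<le>d. (i = j + 1 \<or> j = i + 1) \<longrightarrow> Es i * A * Es j \<noteq> 0\<^sub>m (d+1) (d+1)"
  and bip: "bipartite d Es A"
  and th_inj: "inj_on th {0..d}"
  and th_eig: "\<forall>i\<le>d. eigenvalue A (th i)"
  and E_prim: "\<forall>i\<le>d. primitive_idempotent d A (th i) (E i)"
  and ths_inj: "inj_on ths {0..d}"
  and rowsum: "\<forall>i\<le>d. (\<Sum>j\<le>d. Y i j) = th 0"
  and tail: "is_tail d E (dual_comb d ths Es)"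
begin

lemma Y_far: "i \<le> d \<Longrightarrow> j \<le> d \<Longrightarrow> (i > j+1 \<or> j > i+1) \<Longrightarrow> Y i j = 0"
  using tri0 Y_zero_from by blast

lemma Y_diag: "i \<le> d \<Longrightarrow> Y i i = 0"
  using bip trace_EA unfolding bipartite_def by metis

lemma Y_nzb: "i < d \<Longrightarrow> Y i (i+1) \<noteq> 0"
  using tri1 Y_zero_to by (metis Suc_eq_plus1 Suc_leI less_imp_le_nat)

lemma Y_nzc: "i < d \<Longrightarrow> Y (i+1) i \<noteq> 0"
  using tri1 Y_zero_to by (metis Suc_eq_plus1 Suc_leI less_imp_le_nat)

sublocale tri d Y
  by unfold_locales (use Y_far Y_diag Y_nzb Y_nzc in auto)

lemma eig_ex: assumes j: "j \<le> d"
  shows "\<exists>z. (\<forall>i\<le>d. Ym z i = th j * z i) \<and> (\<exists>i\<le>d. z i \<noteq> 0)"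
proof -
  obtain x where x: "x \<in> carrier_vec (d+1)" "x \<noteq> 0\<^sub>v (d+1)" "A *\<^sub>v x = th j \<cdot>\<^sub>v x"
    using th_eig j A_car unfolding eigenvalue_def eigenvector_def by auto
  obtain z where z: "x = vc z" using vc_surj[OF x(1)] by blast
  have "vc (Ym z) = vc (\<lambda>i. th j * z i)" using x(3) unfolding z A_vc smult_vc .
  hence "\<forall>i\<le>d. Ym z i = th j * z i" using vc_inj by blast
  moreover have "\<exists>i\<le>d. z i \<noteq> 0"
  proof (rule ccontr)
    assume "\<not> ?thesis"
    hence "vc z = vc (\<lambda>i. 0)" by (intro vc_cong) auto
    with x(2) z vc_zero show False by simp
  qed
  ultimately show ?thesis by blast
qed

definition zz :: "nat \<Rightarrow> nat \<Rightarrow> 'a" where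
  "zz j = (if j = 0 then (\<lambda>i. 1) else (SOME z. (\<forall>i\<le>d. Ym z i = th j * z i) \<and> (\<exists>i\<le>d. z i \<noteq> 0)))"

lemma zz0: "zz 0 = (\<lambda>i. 1)" unfolding zz_def by simp

lemma zz_eig: assumes j: "j \<le> d" shows "(\<forall>i\<le>d. Ym (zz j) i = th j * zz j i) \<and> (\<exists>i\<le>d. zz j i \<noteq> 0)"
proof (cases "j = 0")
  case True
  have "Ym (\<lambda>i. 1) i = th 0" if "i \<le> d" for i using rowsum that unfolding Ymul_def by simp
  then show ?thesis using True zz0 by auto
next
  case False
  then show ?thesis unfolding zz_def using someI_ex[OF eig_ex[OF j]] by simp
qed

sublocale tri_eig d Y th zz
  by unfold_locales (use zz_eig th_inj in \<open>auto simp: atLeast0AtMost\<close>)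

abbreviation As where "As \<equiv> dual_comb d ths Es"

lemma As_car: "As \<in> carrier_mat (d+1) (d+1)" unfolding dual_comb_def by simp

lemma E_car: "l \<le> d \<Longrightarrow> E l \<in> carrier_mat (d+1) (d+1)"
  using E_prim unfolding primitive_idempotent_def by auto

lemma zz_vec: "j \<le> d \<Longrightarrow> A *\<^sub>v vc (zz j) = th j \<cdot>\<^sub>v vc (zz j)"
  unfolding A_vc smult_vc using eig by (intro vc_cong) auto

lemma zz_nz: "j \<le> d \<Longrightarrow> vc (zz j) \<noteq> 0\<^sub>v (d+1)"
  using znz vc_nz by blast

lemma E_zz: assumes l: "l \<le> d" and j: "j \<le> d"
  shows "E l *\<^sub>v vc (zz j) = (if l = j then vc (zz j) else 0\<^sub>v (d+1))"
proof (cases "l = j")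
  case True
  have "\<forall>w\<in>carrier_vec (d+1). A *\<^sub>v w = th j \<cdot>\<^sub>v w \<longrightarrow> E j *\<^sub>v w = w"
    using E_prim j unfolding primitive_idempotent_def by blast
  then show ?thesis using True zz_vec[OF j] vc_car[of "zz j"] by auto
next
  case False
  hence "th j \<noteq> th l" using th_inj l j by (auto simp: atLeast0AtMost dest: inj_onD)
  have "\<forall>mu w. mu \<noteq> th l \<longrightarrow> w \<in> carrier_vec (d+1) \<longrightarrow> A *\<^sub>v w = mu \<cdot>\<^sub>v w \<longrightarrow> E l *\<^sub>v w = 0\<^sub>v (d+1)"
    using E_prim l unfolding primitive_idempotent_def by blast
  then show ?thesis using False \<open>th j \<noteq> th l\<close> zz_vec[OF j] vc_car[of "zz j"] by auto
qed

lemma E_inj: assumes "a \<le> d" "b \<le> d" "a \<noteq> b" shows "E a \<noteq> E b"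
proof
  assume "E a = E b"
  hence "E a *\<^sub>v vc (zz a) = E b *\<^sub>v vc (zz a)" by simp
  with E_zz[OF assms(1,1)] E_zz[OF assms(2,1)] assms(3) zz_nz[OF assms(1)] show False by simp
qed

lemma E_kill: assumes l: "l \<le> d" and y: "\<forall>i\<le>d. y i = (\<Sum>j\<le>d. a j * zz j i)"
  and h: "E l *\<^sub>v vc y = 0\<^sub>v (d+1)"
  shows "a l = 0"
proof -
  have "vc y = vc (\<lambda>i. \<Sum>j\<le>d. a j * zz j i)" using y by (intro vc_cong) auto
  hence "E l *\<^sub>v vc y = vec (d+1) (\<lambda>k. \<Sum>j\<le>d. a j * (E l *\<^sub>v vc (zz j)) $ k)"
    using lin_vc[OF E_car[OF l]] by simp
  also have "\<dots> = a l \<cdot>\<^sub>v vc (zz l)"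
  proof (rule eq_vecI)
    fix k assume "k < dim_vec (a l \<cdot>\<^sub>v vc (zz l))"
    hence k: "k < d+1" by simp
    have "(\<Sum>j\<le>d. a j * (E l *\<^sub>v vc (zz j)) $ k) = (\<Sum>j\<le>d. if j = l then a l * vc (zz l) $ k else 0)"
      using E_zz[OF l] k by (intro sum.cong refl) auto
    also have "\<dots> = a l * vc (zz l) $ k" using l by simp
    finally show "vec (d+1) (\<lambda>k. \<Sum>j\<le>d. a j * (E l *\<^sub>v vc (zz j)) $ k) $ k = (a l \<cdot>\<^sub>v vc (zz l)) $ k"
      using k by simp
  qed simp
  finally have "a l \<cdot>\<^sub>v vc (zz l) = 0\<^sub>v (d+1)" using h by simp
  hence "vc (\<lambda>i. a l * zz l i) = 0\<^sub>v (d+1)" unfolding smult_vc .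
  moreover obtain i where "i \<le> d" "zz l i \<noteq> 0" using znz[OF l] by blast
  ultimately show "a l = 0" using vc_eq0 by fastforce
qed

lemma EAsE_zero: assumes l: "l \<le> d" and j: "j \<le> d" and h: "E l * As * E j = 0\<^sub>m (d+1) (d+1)"
  shows "ip (\<lambda>i. ths i * zz j i) (zz l) = 0"
proof -
  obtain a where a: "\<forall>i\<le>d. (\<lambda>i. ths i * zz j i) i = (\<Sum>r\<le>d. a r * zz r i)"
    using span[of "\<lambda>i. ths i * zz j i"] by (elim exE) (rule that)
  have c1: "E l * As \<in> carrier_mat (d+1) (d+1)" using E_car[OF l] As_car by simp
  have c2: "E j *\<^sub>v vc (zz j) \<in> carrier_vec (d+1)" by (rule mult_mat_vec_carrier[OF E_car[OF j] vc_car])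
  have "(E l * As * E j) *\<^sub>v vc (zz j) = (E l * As) *\<^sub>v (E j *\<^sub>v vc (zz j))"
    by (rule assoc_mult_mat_vec[OF c1 E_car[OF j] vc_car])
  also have "\<dots> = E l *\<^sub>v (As *\<^sub>v (E j *\<^sub>v vc (zz j)))"
    by (rule assoc_mult_mat_vec[OF E_car[OF l] As_car c2])
  also have "\<dots> = E l *\<^sub>v vc (\<lambda>i. ths i * zz j i)"
    using As_vc[of ths "zz j"] E_zz[OF j j] by simp
  finally have "E l *\<^sub>v vc (\<lambda>i. ths i * zz j i) = 0\<^sub>m (d+1) (d+1) *\<^sub>v vc (zz j)" using h by simp
  hence "E l *\<^sub>v vc (\<lambda>i. ths i * zz j i) = 0\<^sub>v (d+1)" using zero_mv[OF vc_car[of "zz j"]] by simp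
  from E_kill[OF l _ this] a have "a l = 0" by simp
  with coeff[OF a l] show ?thesis by simp
qed

lemma tail1: assumes "2 \<le> j" "j \<le> d" shows "E 0 * As * E j = 0\<^sub>m (d+1) (d+1)"
proof -
  have "E j \<noteq> E 1" using E_inj assms by auto
  hence "\<not> Delta_adj d E As 0 j" using tail assms unfolding is_tail_def by blast
  moreover have "E 0 \<noteq> E j" using E_inj assms by auto
  ultimately show ?thesis using assms unfolding Delta_adj_def by auto
qed

lemma tail2: "\<exists>m. 2 \<le> m \<and> m \<le> d \<and> (\<forall>j. 2 \<le> j \<longrightarrow> j \<le> d \<longrightarrow> j \<noteq> m \<longrightarrow> E 1 * As * E j = 0\<^sub>m (d+1) (d+1))"
proof (cases "\<exists>m0. 2 \<le> m0 \<and> m0 \<le> d \<and> E 1 * As * E m0 \<noteq> 0\<^sub>m (d+1) (d+1)")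
  case False
  then show ?thesis using d3 by (intro exI[of _ 2]) auto
next
  case True
  then obtain m0 where m0: "2 \<le> m0" "m0 \<le> d" "E 1 * As * E m0 \<noteq> 0\<^sub>m (d+1) (d+1)" by blast
  define S where "S = {E j |j. j \<le> d \<and> E j \<noteq> E 0 \<and> Delta_adj d E As 1 j}"
  have cS: "card S \<le> 1" using tail unfolding is_tail_def S_def by blast
  have fS: "finite S" unfolding S_def
    by (rule finite_subset[of _ "E ` {..d}"]) auto
  have inS: "E j \<in> S" if "2 \<le> j" "j \<le> d" "E 1 * As * E j \<noteq> 0\<^sub>m (d+1) (d+1)" for j
  proof -
    have "E j \<noteq> E 0" "E 1 \<noteq> E j" using E_inj that by auto
    thus ?thesis unfolding S_def Delta_adj_def using that d3 by auto
  qed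
  show ?thesis
  proof (intro exI[of _ m0] conjI allI impI m0(1,2))
    fix j assume j: "2 \<le> j" "j \<le> d" "j \<noteq> m0"
    show "E 1 * As * E j = 0\<^sub>m (d+1) (d+1)"
    proof (rule ccontr)
      assume "E 1 * As * E j \<noteq> 0\<^sub>m (d+1) (d+1)"
      hence "{E j, E m0} \<subseteq> S" using inS j m0 by auto
      hence "card {E j, E m0} \<le> card S" using fS by (rule card_mono[rotated])
      moreover have "E j \<noteq> E m0" using E_inj j m0 by auto
      ultimately show False using cS by simp
    qed
  qed
qed

lemma ths_form: "\<exists>a0 a1. \<forall>i\<le>d. ths i = a0 + a1 * zz 1 i"
proof -
  obtain a where a: "\<forall>i\<le>d. ths i = (\<Sum>r\<le>d. a r * zz r i)"
    using span[of ths] by (elim exE) (rule that)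
  have "a j = 0" if j: "2 \<le> j" "j \<le> d" for j
  proof -
    have "ip (\<lambda>i. ths i * zz j i) (zz 0) = 0" using EAsE_zero[OF _ j(2) tail1[OF j]] by simp
    moreover have "ip (\<lambda>i. ths i * zz j i) (zz 0) = ip ths (zz j)"
      unfolding ipf_def zz0 by (simp add: mult_ac)
    ultimately have "a j * ip (zz j) (zz j) = 0" using coeff[OF a j(2)] by simp
    thus ?thesis using ipnz[OF j(2)] by simp
  qed
  hence "\<forall>i\<le>d. ths i = a 0 + a 1 * zz 1 i"
    using a sum_two[of d "\<lambda>r. a r * zz r _"] d3 by (simp add: zz0)
  thus ?thesis by blast
qed

lemma sq_form: assumes m: "2 \<le> m" "m \<le> d"
  and hm: "\<forall>j. 2 \<le> j \<longrightarrow> j \<le> d \<longrightarrow> j \<noteq> m \<longrightarrow> E 1 * As * E j = 0\<^sub>m (d+1) (d+1)"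
  shows "\<exists>b0 b1 bm. \<forall>i\<le>d. ths i * zz 1 i = b0 + b1 * zz 1 i + bm * zz m i"
proof -
  obtain b where b: "\<forall>i\<le>d. (\<lambda>i. ths i * zz 1 i) i = (\<Sum>r\<le>d. b r * zz r i)"
    using span[of "\<lambda>i. ths i * zz 1 i"] by (elim exE) (rule that)
  have "b j = 0" if j: "2 \<le> j" "j \<le> d" "j \<noteq> m" for j
  proof -
    have "ip (\<lambda>i. ths i * zz j i) (zz 1) = 0" using EAsE_zero[OF _ j(2)] hm j d3 by simp
    moreover have "ip (\<lambda>i. ths i * zz j i) (zz 1) = ip (\<lambda>i. ths i * zz 1 i) (zz j)"
      unfolding ipf_def by (simp add: mult_ac)
    ultimately have "b j * ip (zz j) (zz j) = 0" using coeff[OF b j(2)] by simp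
    thus ?thesis using ipnz[OF j(2)] by simp
  qed
  hence "\<forall>i\<le>d. ths i * zz 1 i = b 0 + b 1 * zz 1 i + b m * zz m i"
    using b sum_three[OF m, of "\<lambda>r. b r * zz r _"] by (simp add: zz0)
  thus ?thesis by blast
qed

lemma Ym_lin3: "Ym (\<lambda>l. c0 + c1 * f l + c2 * h l) i = c0 * Ym (\<lambda>l. 1) i + c1 * Ym f i + c2 * Ym h i"
  unfolding Ymul_def by (simp add: sum.distrib sum_distrib_left distrib_left mult_ac)

lemma Ym_cong: "(\<And>l. l \<le> d \<Longrightarrow> f l = h l) \<Longrightarrow> Ym f i = Ym h i"
  unfolding Ymul_def by (intro sum.cong) auto

lemma Ym_one: "i \<le> d \<Longrightarrow> Ym (\<lambda>l. 1) i = th 0"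
  using eig[of 0 i] by (simp add: zz0)

lemma main: "\<exists>c. \<forall>j. 3 \<le> j \<and> j \<le> d \<longrightarrow> (ths j - ths (j-3)) / (ths (j-1) - ths (j-2)) = c"
proof -
  obtain a0 a1 where a: "\<forall>i\<le>d. ths i = a0 + a1 * zz 1 i" using ths_form by blast
  obtain m where m: "2 \<le> m" "m \<le> d"
    and hm: "\<forall>j. 2 \<le> j \<longrightarrow> j \<le> d \<longrightarrow> j \<noteq> m \<longrightarrow> E 1 * As * E j = 0\<^sub>m (d+1) (d+1)"
    using tail2 by blast
  obtain b0 b1 bm where b: "\<forall>i\<le>d. ths i * zz 1 i = b0 + b1 * zz 1 i + bm * zz m i"
    using sq_form[OF m hm] by blast
  define k where "k = th 0"
  define th1 where "th1 = th 1"
  define tm where "tm = th m"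
  define t where "t = (\<lambda>i. ths i - a0)"
  define lam where "lam = (b1 - a0) * (th1 - tm)"
  define mu where "mu = a1 * b0 * (k - tm)"
  have t_z: "t i = a1 * zz 1 i" if "i \<le> d" for i using a that unfolding t_def by simp
  have t_sq: "(t i)^2 = a1 * b0 + (a1 * b1 - a0 * a1) * zz 1 i + (a1 * bm) * zz m i" if i: "i \<le> d" for i
  proof -
    have "(t i)^2 = t i * (ths i - a0)" unfolding t_def by (simp add: power2_eq_square)
    also have "\<dots> = a1 * (ths i * zz 1 i) - a0 * (a1 * zz 1 i)" unfolding t_z[OF i] by (simp add: algebra_simps)
    also have "\<dots> = a1 * (b0 + b1 * zz 1 i + bm * zz m i) - a0 * (a1 * zz 1 i)" using b i by simp
    finally show ?thesis by (simp add: algebra_simps)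
  qed
  have Yt: "Ym t i = th1 * t i" if i: "i \<le> d" for i
  proof -
    have "Ym t i = Ym (\<lambda>l. 0 + a1 * zz 1 l + 0 * zz 1 l) i" using t_z by (intro Ym_cong) auto
    also have "\<dots> = a1 * Ym (zz 1) i" unfolding Ym_lin3 by simp
    also have "\<dots> = th1 * t i" using eig[of 1 i] i d3 t_z[OF i] unfolding th1_def by simp
    finally show ?thesis .
  qed
  have Yt2: "Ym (\<lambda>l. (t l)^2) i = tm * (t i)^2 + lam * t i + mu" if i: "i \<le> d" for i
  proof -
    have "Ym (\<lambda>l. (t l)^2) i = Ym (\<lambda>l. a1 * b0 + (a1 * b1 - a0 * a1) * zz 1 l + (a1 * bm) * zz m l) i"
      using t_sq by (intro Ym_cong) auto
    also have "\<dots> = a1 * b0 * k + (a1 * b1 - a0 * a1) * (th1 * zz 1 i) + (a1 * bm) * (tm * zz m i)"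
      unfolding Ym_lin3 using Ym_one[OF i] eig[of 1 i] eig[of m i] i d3 m
      unfolding k_def th1_def tm_def by simp
    also have "\<dots> = tm * (t i)^2 + lam * t i + mu"
      unfolding t_sq[OF i] unfolding t_z[OF i] lam_def mu_def by (simp add: algebra_simps)
    finally show ?thesis .
  qed
  have row: "Ym w i = (if 0 < i then Y i (i-1) * w (i-1) else 0) + (if i < d then Y i (i+1) * w (i+1) else 0)"
    if "i \<le> d" for w i using Ym_row[OF that] .
  have Y01: "Y 0 1 = k" using Ym_one[of 0] row[of 0 "\<lambda>l. 1"] d3 unfolding k_def by simp
  have k0: "k \<noteq> 0" using Y01 nzb[of 0] d3 by simp
  have r0a: "k * t 1 = th1 * t 0" using Yt[of 0] row[of 0 t] d3 Y01 by simp
  have r0b: "k * (t 1)^2 = tm * (t 0)^2 + lam * t 0 + mu" using Yt2[of 0] row[of 0 "\<lambda>l. (t l)^2"] d3 Y01 by simp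
  have rs: "Y j (j-1) + Y j (j+1) = k" if "1 \<le> j" "j < d" for j
    using Ym_one[of j] row[of j "\<lambda>l. 1"] that unfolding k_def by simp
  have ra: "Y j (j-1) * t (j-1) + Y j (j+1) * t (j+1) = th1 * t j" if "1 \<le> j" "j < d" for j
    using Yt[of j] row[of j t] that by simp
  have rb: "Y j (j-1) * (t (j-1))^2 + Y j (j+1) * (t (j+1))^2 = tm * (t j)^2 + lam * t j + mu"
    if "1 \<le> j" "j < d" for j
    using Yt2[of j] row[of j "\<lambda>l. (t l)^2"] that by simp
  have bnz: "Y j (j+1) \<noteq> 0" if "1 \<le> j" "j < d" for j using nzb that by simp
  have tinj: "inj_on t {..d}" using ths_inj unfolding t_def inj_on_def by (auto simp: atLeast0AtMost)
  obtain be ga where rec: "\<forall>j. 1 \<le> j \<longrightarrow> j < d \<longrightarrow> t (j-1) + t (j+1) = be * t j + ga"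
    using core_rec[of d k t th1 tm lam mu "\<lambda>j. Y j (j-1)" "\<lambda>j. Y j (j+1)", OF d3 k0 r0a r0b rs ra rb bnz tinj]
    by blast
  obtain c where c: "\<forall>j. 3 \<le> j \<and> j \<le> d \<longrightarrow> (t j - t (j-3)) / (t (j-1) - t (j-2)) = c"
    using final_rec[OF rec] tinj by (auto simp: atLeast0AtMost)
  show ?thesis
  proof (intro exI allI impI)
    fix j assume j: "3 \<le> j \<and> j \<le> d"
    show "(ths j - ths (j-3)) / (ths (j-1) - ths (j-2)) = c"
      using c j unfolding t_def by simp
  qed
qed

end

theorem proposition9p4:
  fixes d :: nat
    and Es E :: "nat \<Rightarrow> 'a::field mat"
    and A :: "'a mat"
    and th ths :: "nat \<Rightarrow> 'a"
  assumes d3: "d \<ge> 3"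
    and sys: "orth_idem_system d Es"
    and A_carrier: "A \<in> carrier_mat (d+1) (d+1)"
    and tridiag0: "\<forall>i\<le>d. \<forall>j\<le>d. (i > j + 1 \<or> j > i + 1) \<longrightarrow> Es i * A * Es j = 0\<^sub>m (d+1) (d+1)"
    and tridiag1: "\<forall>i\<le>d. \<forall>j\<le>d. (i = j + 1 \<or> j = i + 1) \<longrightarrow> Es i * A * Es j \<noteq> 0\<^sub>m (d+1) (d+1)"
    and mfree: "multiplicity_free d A"
    and bip: "bipartite d Es A"
    and th_inj: "inj_on th {0..d}"
    and th_eig: "\<forall>i\<le>d. eigenvalue A (th i)"
    and E_prim: "\<forall>i\<le>d. primitive_idempotent d A (th i) (E i)"
    and ths_inj: "inj_on ths {0..d}"
    and norm: "normalizing d Es A (th 0)"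
    and tail: "is_tail d E (dual_comb d ths Es)"
  shows "\<exists>c. \<forall>j. 3 \<le> j \<and> j \<le> d \<longrightarrow>
           (ths j - ths (j-3)) / (ths (j-1) - ths (j-2)) = c"
proof -
  obtain v :: "nat \<Rightarrow> 'a vec" and Y :: "nat \<Rightarrow> nat \<Rightarrow> 'a" where
    hv: "\<forall>i\<le>d. v i \<in> carrier_vec (d+1) \<and> (\<exists>w \<in> carrier_vec (d+1). v i = Es i *\<^sub>v w)"
    and hind: "\<forall>c :: nat \<Rightarrow> 'a. (\<forall>k<d+1. (\<Sum>i\<le>d. c i * (v i $ k)) = 0) \<longrightarrow> (\<forall>i\<le>d. c i = 0)"
    and hspan: "\<forall>w \<in> carrier_vec (d+1). \<exists>c :: nat \<Rightarrow> 'a. \<forall>k<d+1. w $ k = (\<Sum>i\<le>d. c i * (v i $ k))"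
    and hY: "\<forall>j\<le>d. \<forall>k<d+1. (A *\<^sub>v v j) $ k = (\<Sum>i\<le>d. Y i j * (v i $ k))"
    and hrow: "\<forall>i\<le>d. (\<Sum>j\<le>d. Y i j) = th 0"
    using norm unfolding normalizing_def by blast
  have Es1: "\<And>i. i \<le> d \<Longrightarrow> Es i \<in> carrier_mat (d+1) (d+1)"
    and Es2: "\<And>i j. i \<le> d \<Longrightarrow> j \<le> d \<Longrightarrow> Es i * Es j = (if i = j then Es i else 0\<^sub>m (d+1) (d+1))"
    using sys unfolding orth_idem_system_def by auto
  interpret mainloc d Es A v Y E th ths
  proof (unfold_locales)
    show "\<And>i. i \<le> d \<Longrightarrow> Es i \<in> carrier_mat (d+1) (d+1)" by (rule Es1)
    show "\<And>i j. i \<le> d \<Longrightarrow> j \<le> d \<Longrightarrow> Es i * Es j = (if i = j then Es i else 0\<^sub>m (d+1) (d+1))" by (rule Es2)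
    show "A \<in> carrier_mat (d+1) (d+1)" by (rule A_carrier)
    show "\<And>i. i \<le> d \<Longrightarrow> v i \<in> carrier_vec (d+1)" using hv by blast
    show "\<And>i. i \<le> d \<Longrightarrow> \<exists>w\<in>carrier_vec (d+1). v i = Es i *\<^sub>v w" using hv by blast
    show "\<And>c. (\<forall>k<d+1. (\<Sum>i\<le>d. c i * (v i $ k)) = 0) \<Longrightarrow> \<forall>i\<le>d. c i = 0" using hind by blast
    show "\<And>w. w \<in> carrier_vec (d+1) \<Longrightarrow> \<exists>c. \<forall>k<d+1. w $ k = (\<Sum>i\<le>d. c i * (v i $ k))" using hspan by blast
    show "\<And>j k. j \<le> d \<Longrightarrow> k < d+1 \<Longrightarrow> (A *\<^sub>v v j) $ k = (\<Sum>i\<le>d. Y i j * (v i $ k))" using hY by blast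
  qed (use d3 tridiag0 tridiag1 bip th_inj th_eig E_prim ths_inj hrow tail in auto)
  show ?thesis by (rule main)
qed


end
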